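(* Fix a natural number $M\ge1$. In the random coefficients perturbed utility model described in the context, suppose Assumptions 1, 2, 3, 5 and B.1 (as stated in the context) hold with this same $M$. Then every $M$-th order moment \[ \int\beta_{k_1,\ell_1}\cdots\beta_{k_M,\ell_M}\,d\nu(\beta),\qquad k_m\in\{1,\dots,K\},\ \ell_m\in\{1,\dots,d_{k_m}\}, \] is identified.
   Context: Model. There are $K$ goods. For each good $k\in\{1,\dots,K\}$ there is a covariate vector $x_k=(x_{k,1},\dots,x_{k,d_k})'\in\mathbb{R}^{d_k}$ and a random coefficient vector $\beta_k=(\beta_{k,1},\dots,\beta_{k,d_k})'\in\mathbb{R}^{d_k}$; write $x=(x_1',\dots,x_K')'\in\mathbb{R}^{d}$ with $d=\sum_k d_k$, and $\beta=(\beta_1',\dots,\beta_K')'$. Let $\varepsilon$ be an unobservable of unrestricted dimension in a measurable space $E$, $B\subseteq\mathbb{R}^K$ a feasibility set and $D:B\times E\to\mathbb{R}\cup\{-\infty\}$ a disturbance. Choices satisfy $Y(x,\beta,\varepsilon)\in\arg\max_{y\in B}\sum_{k=1}^K y_k(\beta_k'x_k)+D(y,\varepsilon)$ (argmax nonempty). The average structural function is $\overline{Y}(x)=\int Y(x,\beta,\varepsilon)\,d\tau(\beta,\varepsilon)$ for a probability measure $\tau$ not depending on $x$; $\overline{Y}_k$ is its $k$-th component. Assumption 1: under $\tau$, $\beta$ and $\varepsilon$ are independent, $\tau=\nu\otimes\mu$, and $\overline{Y}(x)$ is finite. Define $\overline{Y}(x,\beta)=\int Y(x,\beta,\varepsilon)\,d\mu(\varepsilon)$,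 so $\overline{Y}(x)=\int\overline{Y}(x,\beta)\,d\nu(\beta)$. Let $\overline{B}$ be the convex hull of $B$ and $\overline{D}(y)=\sup\{\int D(\tilde Y(\varepsilon),\varepsilon)\,d\mu(\varepsilon):\tilde Y:E\to B\text{ measurable},\ \int\tilde Y\,d\mu=y\}$ ($\sup\emptyset=-\infty$). Assumption 2: (i) $\overline{Y}(x,\beta)$ equals (is the unique element of) $\arg\max_{y\in\overline{B}}\sum_k y_k(\beta_k'x_k)+\overline{D}(y)$; (ii) $\overline{B}$ is nonempty, closed, convex; (iii) $\overline{D}:\mathbb{R}^K\to\mathbb{R}\cup\{-\infty\}$ is concave, upper semicontinuous, finite at some $y\in\overline{B}$. Define $V(u)=\max_{y\in\overline{B}}\sum_k y_ku_k+\overline{D}(y)$, $u\in\mathbb{R}^K$, and $\partial_\gamma V=\partial_{\gamma_1}\cdots\partial_{\gamma_m}V$ for $\gamma\in\{1,\dots,K\}^m$. Assumption 3: all covariates are continuous, and each $x_k$ is specific to good $k$ (enters only $\beta_k'x_k$). Assumption 5 (for $M$): (i) for each $k$ and every $M$-th order partial derivative, $\partial_{x_{k_1,\ell_1}}\cdots\partial_{x_{k_M,\ell_M}}\overline{Y}_k(0)=\int\partial_{x_{k_1,\ell_1}}\cdots\partial_{x_{k_M,\ell_M}}\overline{Y}_k(0,\beta)\,d\nu(\beta)$; (ii) all $M$-th order moments $\int\beta_{k_1,\ell_1}\cdots\beta_{k_M,\ell_M}\,d\nu$ exist and are finite; (iii) $V$ is $(M+1)$-times continuously differentiable near $0$;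 (iv) $\partial_\gamma V(0)\ne0$ for all $\gamma\in\{1,\dots,K\}^{M+1}$; (v) $\overline{Y}(x)$ is known on a neighborhood of $0$, or more generally on $H\cap\mathbb{R}^d_+$ for a neighborhood $H$ of $0$. Assumption B.1: $V$ is known in a neighborhood of $0$, up to an additive constant. Identification: a quantity is identified if it is uniquely determined by the objects assumed known (the average structural function on the stated region and $V$ near $0$ up to a constant), i.e. all specifications $(B,D,\mu,\nu)$ satisfying the hypotheses and generating the same known objects yield the same value. *)

theory Defs
  imports "HOL-Probability.Probability"
begin

definition pd :: "'n::finite \<Rightarrow> (real^'n \<Rightarrow> real) \<Rightarrow> real^'n \<Rightarrow> real" where
  "pd c f x = deriv (\<lambda>t. f (x + t *\<^sub>R axis c 1)) 0"

primrec pds :: "'n::finite list \<Rightarrow> (real^'n \<Rightarrow> real) \<Rightarrow> real^'n \<Rightarrow> real" where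
  "pds [] f = f"
| "pds (c # cs) f = pd c (pds cs f)"

primrec pds_exist :: "'n::finite list \<Rightarrow> (real^'n \<Rightarrow> real) \<Rightarrow> real^'n \<Rightarrow> bool" where
  "pds_exist [] f x = True"
| "pds_exist (c # cs) f x =
     ((\<forall>\<^sub>F y in nhds x. pds_exist cs f y) \<and>
      (\<lambda>t. pds cs f (x + t *\<^sub>R axis c 1)) differentiable (at 0))"

definition Ck_on :: "nat \<Rightarrow> (real^'n::finite \<Rightarrow> real) \<Rightarrow> (real^'n) set \<Rightarrow> bool" where
  "Ck_on m f S \<longleftrightarrow> open S \<and>
     (\<forall>cs c x. length cs < m \<longrightarrow> x \<in> S \<longrightarrow>
        (\<lambda>t. pds cs f (x + t *\<^sub>R axis c 1)) differentiable (at 0)) \<and>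
     (\<forall>cs. length cs \<le> m \<longrightarrow> continuous_on S (pds cs f))"

text \<open>Covariates / coefficients are indexed by a finite type 'c; good c is the good
to which covariate c belongs (Assumption 3: each covariate is specific to one good).
idx good b x is the vector (beta_k' x_k)_k.\<close>
definition idx :: "('c::finite \<Rightarrow> 'k::finite) \<Rightarrow> real^'c \<Rightarrow> real^'c \<Rightarrow> real^'k" where
  "idx good b x = (\<chi> k. \<Sum>c\<in>{c. good c = k}. b $ c * x $ c)"

definition ext_int :: "'a measure \<Rightarrow> ('a \<Rightarrow> ereal) \<Rightarrow> ereal" where
  "ext_int \<mu> f = enn2ereal (\<integral>\<^sup>+ x. e2ennreal (f x) \<partial>\<mu>)
                - enn2ereal (\<integral>\<^sup>+ x. e2ennreal (- f x) \<partial>\<mu>)"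

definition Dbar :: "(real^'k::finite) set \<Rightarrow> (real^'k \<Rightarrow> 'e \<Rightarrow> ereal) \<Rightarrow> 'e measure
                    \<Rightarrow> real^'k \<Rightarrow> ereal" where
  "Dbar B D \<mu> y = Sup {ext_int \<mu> (\<lambda>e. D (Yt e) e) | Yt :: 'e \<Rightarrow> real^'k.
      Yt \<in> borel_measurable \<mu> \<and> (\<forall>e\<in>space \<mu>. Yt e \<in> B) \<and>
      integrable \<mu> Yt \<and> integral\<^sup>L \<mu> Yt = y}"

definition Vfun :: "(real^'k::finite) set \<Rightarrow> (real^'k \<Rightarrow> 'e \<Rightarrow> ereal) \<Rightarrow> 'e measure
                    \<Rightarrow> real^'k \<Rightarrow> ereal" where
  "Vfun B D \<mu> u = Sup {ereal (u \<bullet> y) + Dbar B D \<mu> y | y. y \<in> convex hull B}"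

definition ASFb :: "'e measure \<Rightarrow> (real^'c \<Rightarrow> real^'c \<Rightarrow> 'e \<Rightarrow> real^'k::finite)
                    \<Rightarrow> real^'c \<Rightarrow> real^'c \<Rightarrow> real^'k" where
  "ASFb \<mu> Y x b = integral\<^sup>L \<mu> (\<lambda>e. Y x b e)"

definition ASF :: "(real^'c::finite) measure \<Rightarrow> 'e measure
                   \<Rightarrow> (real^'c \<Rightarrow> real^'c \<Rightarrow> 'e \<Rightarrow> real^'k::finite) \<Rightarrow> real^'c \<Rightarrow> real^'k" where
  "ASF \<nu> \<mu> Y x = integral\<^sup>L (\<nu> \<Otimes>\<^sub>M \<mu>) (\<lambda>(b, e). Y x b e)"

definition rc_model :: "('c::finite \<Rightarrow> 'k::finite) \<Rightarrow> (real^'k) set \<Rightarrow> (real^'k \<Rightarrow> 'e \<Rightarrow> ereal)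
     \<Rightarrow> 'e measure \<Rightarrow> (real^'c \<Rightarrow> real^'c \<Rightarrow> 'e \<Rightarrow> real^'k) \<Rightarrow> bool" where
  "rc_model good B D \<mu> Y \<longleftrightarrow>
     (\<forall>y\<in>B. \<forall>e\<in>space \<mu>. D y e \<noteq> \<infinity>) \<and>
     (\<forall>x b. \<forall>e\<in>space \<mu>. Y x b e \<in> B \<and>
        (\<forall>y\<in>B. ereal (y \<bullet> idx good b x) + D y e
                 \<le> ereal (Y x b e \<bullet> idx good b x) + D (Y x b e) e))"

text \<open>Assumption 1 (tau = nu \<otimes> mu, both probability measures, nu a Borel measure on
R^d, and the ASF finite, i.e. Y(x,.,.) integrable under tau).\<close>
definition assm1 :: "(real^'c::finite) measure \<Rightarrow> 'e measure
     \<Rightarrow> (real^'c \<Rightarrow> real^'c \<Rightarrow> 'e \<Rightarrow> real^'k::finite) \<Rightarrow> bool" where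
  "assm1 \<nu> \<mu> Y \<longleftrightarrow> prob_space \<nu> \<and> sets \<nu> = sets borel \<and> prob_space \<mu> \<and>
     (\<forall>x. integrable (\<nu> \<Otimes>\<^sub>M \<mu>) (\<lambda>(b, e). Y x b e))"

definition ereal_concave :: "(real^'k::finite \<Rightarrow> ereal) \<Rightarrow> bool" where
  "ereal_concave f \<longleftrightarrow> (\<forall>y z. \<forall>t::real. 0 \<le> t \<and> t \<le> 1 \<longrightarrow>
      ereal t * f y + ereal (1 - t) * f z \<le> f (t *\<^sub>R y + (1 - t) *\<^sub>R z))"

definition ereal_usc :: "(real^'k::finite \<Rightarrow> ereal) \<Rightarrow> bool" where
  "ereal_usc f \<longleftrightarrow> (\<forall>y. Limsup (at y) f \<le> f y)"

definition assm2 :: "('c::finite \<Rightarrow> 'k::finite) \<Rightarrow> (real^'k) set \<Rightarrow> (real^'k \<Rightarrow> 'e \<Rightarrow> ereal)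
     \<Rightarrow> 'e measure \<Rightarrow> (real^'c \<Rightarrow> real^'c \<Rightarrow> 'e \<Rightarrow> real^'k) \<Rightarrow> bool" where
  "assm2 good B D \<mu> Y \<longleftrightarrow>
     (\<forall>x b. {y \<in> convex hull B. \<forall>z \<in> convex hull B.
               ereal (z \<bullet> idx good b x) + Dbar B D \<mu> z
                 \<le> ereal (y \<bullet> idx good b x) + Dbar B D \<mu> y} = {ASFb \<mu> Y x b}) \<and>
     convex hull B \<noteq> {} \<and> closed (convex hull B) \<and> convex (convex hull B) \<and>
     ereal_concave (Dbar B D \<mu>) \<and> ereal_usc (Dbar B D \<mu>) \<and>
     (\<exists>y \<in> convex hull B. \<bar>Dbar B D \<mu> y\<bar> \<noteq> \<infinity>)"

text \<open>Assumption 5 (i)--(iv) for M. (v) and Assumption B.1 concern what is known and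
appear in the identification statement itself.\<close>
definition assm5 :: "nat \<Rightarrow> (real^'k::finite) set \<Rightarrow> (real^'k \<Rightarrow> 'e \<Rightarrow> ereal)
     \<Rightarrow> 'e measure \<Rightarrow> (real^'c::finite) measure \<Rightarrow> (real^'c \<Rightarrow> real^'c \<Rightarrow> 'e \<Rightarrow> real^'k) \<Rightarrow> bool" where
  "assm5 M B D \<mu> \<nu> Y \<longleftrightarrow>
     (\<forall>k. \<forall>cs. length cs = M \<longrightarrow>
        pds_exist cs (\<lambda>x. ASF \<nu> \<mu> Y x $ k) 0 \<and>
        pds cs (\<lambda>x. ASF \<nu> \<mu> Y x $ k) 0
          = integral\<^sup>L \<nu> (\<lambda>b. pds cs (\<lambda>x. ASFb \<mu> Y x b $ k) 0)) \<and>
     (\<forall>cs. length cs = M \<longrightarrow> integrable \<nu> (\<lambda>b. prod_list (map (\<lambda>c. b $ c) cs))) \<and>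
     (\<exists>\<epsilon>>0. (\<forall>u\<in>ball 0 \<epsilon>. \<bar>Vfun B D \<mu> u\<bar> \<noteq> \<infinity>) \<and>
             Ck_on (Suc M) (\<lambda>u. real_of_ereal (Vfun B D \<mu> u)) (ball 0 \<epsilon>)) \<and>
     (\<forall>\<gamma>. length \<gamma> = Suc M \<longrightarrow> pds \<gamma> (\<lambda>u. real_of_ereal (Vfun B D \<mu> u)) 0 \<noteq> 0)"

end

theory Submission imports Defs begin

lemma pds_append: "pds (a @ b) f = pds a (pds b f)"
  by (induction a) auto

lemma deriv_cong_nhds:
  assumes "\<forall>\<^sub>F t in nhds x. f t = g t"
  shows "deriv f x = deriv g x"
proof -
  have "\<And>D. (f has_field_derivative D) (at x) = (g has_field_derivative D) (at x)"
    by (rule DERIV_cong_ev) (use assms in auto)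
  then show ?thesis unfolding deriv_def by simp
qed

lemma line_ev:
  fixes x :: "real^'n::finite"
  assumes "open S" "x \<in> S"
  shows "\<forall>\<^sub>F t in nhds 0. x + t *\<^sub>R v \<in> S"
proof -
  have "((\<lambda>t. x + t *\<^sub>R v) \<longlongrightarrow> x + 0 *\<^sub>R v) (nhds (0::real))"
    by (intro tendsto_intros filterlim_ident)
  then have "((\<lambda>t. x + t *\<^sub>R v) \<longlongrightarrow> x) (nhds (0::real))" by simp
  from topological_tendstoD[OF this assms] show ?thesis .
qed

lemma pds_local:
  assumes "\<forall>\<^sub>F z in nhds x. f z = g z"
  shows "pds cs f x = pds cs g x"
  using assms
proof (induction cs arbitrary: x)
  case Nil
  then show ?case using eventually_nhds_x_imp_x by force
next
  case (Cons c cs)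
  from Cons.prems obtain S where S: "open S" "x \<in> S" "\<forall>z\<in>S. f z = g z"
    unfolding eventually_nhds by blast
  have eq: "pds cs f z = pds cs g z" if "z \<in> S" for z
    apply (rule Cons.IH)
    using eventually_nhds_in_open[OF S(1) that] S(3) by (auto elim: eventually_mono)
  have "\<forall>\<^sub>F t in nhds 0. pds cs f (x + t *\<^sub>R axis c 1) = pds cs g (x + t *\<^sub>R axis c 1)"
    using line_ev[OF S(1,2), of "axis c 1"] eq by (auto elim: eventually_mono)
  then show ?case by (simp add: pd_def deriv_cong_nhds)
qed

lemma deriv_add_const: "deriv (\<lambda>t. h t + (a::real)) x = deriv h x"
proof -
  have "\<And>D. ((\<lambda>t. h t + a) has_field_derivative D) (at x) = (h has_field_derivative D) (at x)"
  proof
    fix D assume "((\<lambda>t. h t + a) has_field_derivative D) (at x)"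
    from DERIV_add[OF this DERIV_const[of "-a"]] show "(h has_field_derivative D) (at x)" by simp
  next
    fix D assume "(h has_field_derivative D) (at x)"
    from DERIV_add[OF this DERIV_const[of "a"]] show "((\<lambda>t. h t + a) has_field_derivative D) (at x)" by simp
  qed
  then show ?thesis unfolding deriv_def by simp
qed

lemma pds_add_const: "cs \<noteq> [] \<Longrightarrow> pds cs (\<lambda>u. f u + (a::real)) = pds cs f"
proof (induction cs)
  case Nil then show ?case by simp
next
  case (Cons c cs)
  show ?case
  proof (cases "cs = []")
    case True then show ?thesis by (simp add: pd_def deriv_add_const fun_eq_iff)
  next
    case False then show ?thesis using Cons by simp
  qed
qed

lemma idx_zero: "idx good b 0 = 0"
  by (simp add: idx_def vec_eq_iff)

lemma idx_line: "idx good b (x + t *\<^sub>R axis c 1) = idx good b x + (t * b $ c) *\<^sub>R axis (good c) 1"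
proof -
  have "(\<Sum>c'\<in>{c'. good c' = k}. b $ c' * (x $ c' + t * axis c 1 $ c'))
      = (\<Sum>c'\<in>{c'. good c' = k}. b $ c' * x $ c') + (t * b $ c) * axis (good c) 1 $ k" for k
  proof -
    have "(\<Sum>c'\<in>{c'. good c' = k}. b $ c' * (x $ c' + t * axis c 1 $ c'))
      = (\<Sum>c'\<in>{c'. good c' = k}. b $ c' * x $ c') + (\<Sum>c'\<in>{c'. good c' = k}. (if c' = c then t * b $ c else 0))"
    proof -
      have "\<And>c'. b $ c' * (x $ c' + t * axis c 1 $ c') = b $ c' * x $ c' + (if c' = c then t * b $ c else 0)"
        by (simp add: axis_def algebra_simps)
      then show ?thesis by (simp add: sum.distrib)
    qed
    also have "(\<Sum>c'\<in>{c'. good c' = k}. (if c' = c then t * b $ c else 0)) = (t * b $ c) * axis (good c) 1 $ k"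
      by (simp add: sum.delta axis_def)
    finally show ?thesis .
  qed
  then show ?thesis by (simp add: idx_def vec_eq_iff)
qed

lemma deriv_right_unique:
  fixes h1 h2 :: "real \<Rightarrow> real"
  assumes "h1 differentiable (at 0)" "h2 differentiable (at 0)"
    and "d > 0" "\<And>t. 0 \<le> t \<Longrightarrow> t < d \<Longrightarrow> h1 t = h2 t"
  shows "deriv h1 0 = deriv h2 0"
proof -
  have D1: "(h1 has_field_derivative deriv h1 0) (at 0 within {0..})"
    using assms(1) DERIV_deriv_iff_real_differentiable has_field_derivative_at_within by blast
  have D2: "(h2 has_field_derivative deriv h2 0) (at 0 within {0..})"
    using assms(2) DERIV_deriv_iff_real_differentiable has_field_derivative_at_within by blast
  have D1': "(h2 has_field_derivative deriv h1 0) (at 0 within {0..})"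
    by (rule has_field_derivative_transform_within[OF D1 assms(3)]) (use assms(4) in auto)
  show ?thesis
    by (rule has_field_derivative_unique[OF D1' D2]) (simp add: at_within_Ici_at_right)
qed

lemma pds_orth:
  fixes f1 f2 :: "real^'n::finite \<Rightarrow> real"
  assumes "open U" "y \<in> U" "\<forall>c. 0 \<le> y$c"
    "\<forall>z\<in>U. (\<forall>c. 0 \<le> z$c) \<longrightarrow> f1 z = f2 z"
    "pds_exist cs f1 y" "pds_exist cs f2 y"
  shows "pds cs f1 y = pds cs f2 y"
  using assms
proof (induction cs arbitrary: y U)
  case Nil
  then show ?case by simp
next
  case (Cons c cs)
  have "\<forall>\<^sub>F z in nhds y. z \<in> U \<and> pds_exist cs f1 z \<and> pds_exist cs f2 z"
    using Cons.prems eventually_nhds_in_open[OF Cons.prems(1,2)]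
    by (auto intro: eventually_conj)
  then obtain S where S: "open S" "y \<in> S" "\<forall>z\<in>S. z \<in> U \<and> pds_exist cs f1 z \<and> pds_exist cs f2 z"
    unfolding eventually_nhds by blast
  have eq: "pds cs f1 z = pds cs f2 z" if "z \<in> S" "\<forall>c. 0 \<le> z$c" for z
    by (rule Cons.IH[OF S(1) that]) (use S Cons.prems(4) that in auto)
  obtain d where d: "d > 0" "\<forall>t. dist t 0 < d \<longrightarrow> y + t *\<^sub>R axis c 1 \<in> S"
    using line_ev[OF S(1,2), of "axis c 1"] unfolding eventually_nhds_metric by blast
  have "deriv (\<lambda>t. pds cs f1 (y + t *\<^sub>R axis c 1)) 0 = deriv (\<lambda>t. pds cs f2 (y + t *\<^sub>R axis c 1)) 0"
  proof (rule deriv_right_unique[OF _ _ d(1)])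
    show "(\<lambda>t. pds cs f1 (y + t *\<^sub>R axis c 1)) differentiable at 0"
      using Cons.prems(5) by simp
    show "(\<lambda>t. pds cs f2 (y + t *\<^sub>R axis c 1)) differentiable at 0"
      using Cons.prems(6) by simp
    fix t :: real assume t: "0 \<le> t" "t < d"
    show "pds cs f1 (y + t *\<^sub>R axis c 1) = pds cs f2 (y + t *\<^sub>R axis c 1)"
    proof (rule eq)
      show "y + t *\<^sub>R axis c 1 \<in> S" using d t by auto
      show "\<forall>c'. 0 \<le> (y + t *\<^sub>R axis c 1) $ c'"
        using Cons.prems(3) t by (auto simp: axis_def)
    qed
  qed
  then show ?case by (simp add: pd_def)
qed

lemma env:
  fixes good :: "'c::finite \<Rightarrow> 'k::finite"
  assumes A2: "assm2 good B D mu Y" and ep: "\<epsilon> > 0"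
    and fin: "\<forall>u\<in>ball 0 \<epsilon>. \<bar>Vfun B D mu u\<bar> \<noteq> \<infinity>"
    and dif: "\<forall>u\<in>ball 0 \<epsilon>. (\<lambda>t. real_of_ereal (Vfun B D mu (u + t *\<^sub>R axis k 1))) differentiable (at 0)"
    and uin: "idx good b x \<in> ball 0 \<epsilon>"
  shows "ASFb mu Y x b $ k = pd k (\<lambda>u. real_of_ereal (Vfun B D mu u)) (idx good b x)"
proof -
  define u where "u = idx good b x"
  define y where "y = ASFb mu Y x b"
  define V where "V = Vfun B D mu"
  define Vr where "Vr = (\<lambda>u. real_of_ereal (V u))"
  have "y \<in> {y \<in> convex hull B. \<forall>z \<in> convex hull B.
               ereal (z \<bullet> u) + Dbar B D mu z \<le> ereal (y \<bullet> u) + Dbar B D mu y}"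
    using A2 unfolding assm2_def u_def y_def by blast
  then have yh: "y \<in> convex hull B" and ymax: "\<And>z. z \<in> convex hull B \<Longrightarrow>
      ereal (z \<bullet> u) + Dbar B D mu z \<le> ereal (y \<bullet> u) + Dbar B D mu y" by auto
  have upper: "ereal (u' \<bullet> y) + Dbar B D mu y \<le> V u'" for u'
    unfolding V_def Vfun_def by (rule Sup_upper) (use yh in blast)
  have "V u \<le> ereal (u \<bullet> y) + Dbar B D mu y"
    unfolding V_def Vfun_def
    by (rule Sup_least) (use ymax in \<open>auto simp: inner_commute\<close>)
  with upper[of u] have Vu: "V u = ereal (u \<bullet> y) + Dbar B D mu y" by (rule antisym[rotated])
  have finu: "\<bar>V u\<bar> \<noteq> \<infinity>" using bspec[OF fin uin] unfolding V_def u_def .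
  obtain dd where dd: "Dbar B D mu y = ereal dd"
    using finu Vu by (cases "Dbar B D mu y") auto
  have Vru: "Vr u = u \<bullet> y + dd" using Vu dd by (simp add: Vr_def)
  have low: "Vr u' \<ge> u' \<bullet> y + dd" if "u' \<in> ball 0 \<epsilon>" for u'
  proof -
    have "\<bar>V u'\<bar> \<noteq> \<infinity>" using bspec[OF fin that] unfolding V_def .
    then obtain r where r: "V u' = ereal r" by (cases "V u'") auto
    from upper[of u'] show ?thesis by (simp add: dd r Vr_def)
  qed
  define \<phi> where "\<phi> = (\<lambda>t. Vr (u + t *\<^sub>R axis k 1))"
  have "\<phi> differentiable (at 0)" using dif uin unfolding \<phi>_def Vr_def V_def u_def by blast
  then have Dphi: "(\<phi> has_field_derivative deriv \<phi> 0) (at 0)"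
    using DERIV_deriv_iff_real_differentiable by blast
  have Dpsi: "((\<lambda>t. \<phi> t - t * y $ k) has_field_derivative deriv \<phi> 0 - 1 * y $ k) (at 0)"
    by (intro derivative_intros Dphi DERIV_cmult_right[OF DERIV_ident])
  define \<delta> where "\<delta> = \<epsilon> - norm u"
  have dpos: "\<delta> > 0" using uin unfolding \<delta>_def u_def by simp
  have "deriv \<phi> 0 - 1 * y $ k = 0"
  proof (rule DERIV_local_min[OF Dpsi dpos], intro allI impI)
    fix t :: real assume "\<bar>0 - t\<bar> < \<delta>"
    then have "norm (u + t *\<^sub>R axis k 1) < \<epsilon>"
      using norm_triangle_ineq[of u "t *\<^sub>R axis k 1"] unfolding \<delta>_def by simp
    then have "\<phi> t \<ge> (u + t *\<^sub>R axis k 1) \<bullet> y + dd" unfolding \<phi>_def by (intro low) simp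
    moreover have "(u + t *\<^sub>R axis k 1) \<bullet> y = u \<bullet> y + t * y $ k"
      by (simp add: inner_add_left inner_axis')
    ultimately show "\<phi> 0 - 0 * y $ k \<le> \<phi> t - t * y $ k"
      unfolding \<phi>_def using Vru by simp
  qed
  then show ?thesis
    unfolding u_def[symmetric] y_def[symmetric] pd_def \<phi>_def Vr_def V_def by simp
qed

lemma chain:
  fixes good :: "'c::finite \<Rightarrow> 'k::finite" and G :: "real^'k \<Rightarrow> real" and A :: "real^'c \<Rightarrow> real"
  assumes Ov: "open Ov"
    and A_eq: "\<forall>x. idx good b x \<in> Ov \<longrightarrow> A x = G (idx good b x)"
    and dif: "\<forall>cs' g u. length cs' < n \<longrightarrow> u \<in> Ov \<longrightarrow>
                 (\<lambda>t. pds cs' G (u + t *\<^sub>R axis g 1)) differentiable (at 0)"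
  shows "length cs \<le> n \<Longrightarrow> idx good b x \<in> Ov \<Longrightarrow>
    pds cs A x = prod_list (map (\<lambda>c. b $ c) cs) * pds (map good cs) G (idx good b x)"
proof (induction cs arbitrary: x)
  case Nil
  then show ?case using A_eq by simp
next
  case (Cons c cs)
  define L where "L = idx good b"
  define P where "P = prod_list (map (\<lambda>c. b $ c) cs)"
  define \<psi> where "\<psi> = (\<lambda>s. pds (map good cs) G (L x + s *\<^sub>R axis (good c) 1))"
  have Lline: "L (x + t *\<^sub>R axis c 1) = L x + (t * b $ c) *\<^sub>R axis (good c) 1" for t
    unfolding L_def by (rule idx_line)
  have ev: "\<forall>\<^sub>F t in nhds 0. L x + t *\<^sub>R (b $ c *\<^sub>R axis (good c) 1) \<in> Ov"
    by (rule line_ev[OF Ov]) (use Cons.prems in \<open>simp add: L_def\<close>)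
  have "\<forall>\<^sub>F t in nhds 0. pds cs A (x + t *\<^sub>R axis c 1) = P * \<psi> (t * b $ c)"
    using ev
  proof (rule eventually_mono)
    fix t assume "L x + t *\<^sub>R (b $ c *\<^sub>R axis (good c) 1) \<in> Ov"
    then have "L (x + t *\<^sub>R axis c 1) \<in> Ov" by (simp add: Lline)
    then show "pds cs A (x + t *\<^sub>R axis c 1) = P * \<psi> (t * b $ c)"
      using Cons.IH[of "x + t *\<^sub>R axis c 1"] Cons.prems(1)
      by (simp add: L_def[symmetric] P_def \<psi>_def Lline)
  qed
  then have d1: "pd c (pds cs A) x = deriv (\<lambda>t. P * \<psi> (t * b $ c)) 0"
    unfolding pd_def by (rule deriv_cong_nhds)
  have "\<psi> differentiable (at 0)"
    using dif Cons.prems unfolding \<psi>_def L_def by simp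
  then have Dpsi: "(\<psi> has_field_derivative deriv \<psi> 0) (at 0)"
    using DERIV_deriv_iff_real_differentiable by blast
  have Dpsi': "(\<psi> has_field_derivative deriv \<psi> 0) (at (0 * b $ c))" using Dpsi by simp
  have "((\<lambda>t. \<psi> (t * b $ c)) has_field_derivative deriv \<psi> 0 * b $ c) (at 0)"
    by (rule DERIV_chain2[where g="\<lambda>t. t * b $ c" and x=0, OF Dpsi']) (intro derivative_eq_intros, auto)
  then have "((\<lambda>t. P * \<psi> (t * b $ c)) has_field_derivative P * (deriv \<psi> 0 * b $ c)) (at 0)"
    by (rule DERIV_cmult)
  then have "deriv (\<lambda>t. P * \<psi> (t * b $ c)) 0 = P * (deriv \<psi> 0 * b $ c)"
    by (rule DERIV_imp_deriv)
  moreover have "pd (good c) (pds (map good cs) G) (L x) = deriv \<psi> 0"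
    unfolding pd_def \<psi>_def ..
  ultimately show ?case using d1 by (simp add: P_def L_def)
qed

lemma moment_formula:
  fixes good :: "'c::finite \<Rightarrow> 'k::finite" and cs :: "'c list"
  assumes A2: "assm2 good B D mu Y" and A5: "assm5 M B D mu nu Y" and len: "length cs = M"
  shows "pds cs (\<lambda>x. ASF nu mu Y x $ k) 0
     = integral\<^sup>L nu (\<lambda>b. prod_list (map (\<lambda>c. b $ c) cs))
       * pds (map good cs @ [k]) (\<lambda>u. real_of_ereal (Vfun B D mu u)) 0"
proof -
  define Vr where "Vr = (\<lambda>u. real_of_ereal (Vfun B D mu u))"
  from A5 obtain \<epsilon> where ep: "\<epsilon> > 0" and fin: "\<forall>u\<in>ball 0 \<epsilon>. \<bar>Vfun B D mu u\<bar> \<noteq> \<infinity>"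
    and Ck: "Ck_on (Suc M) Vr (ball 0 \<epsilon>)"
    unfolding assm5_def Vr_def by blast
  from A5 have i: "pds cs (\<lambda>x. ASF nu mu Y x $ k) 0
          = integral\<^sup>L nu (\<lambda>b. pds cs (\<lambda>x. ASFb mu Y x b $ k) 0)"
    unfolding assm5_def using len by blast
  have difV: "\<And>cs' g u. length cs' < Suc M \<Longrightarrow> u \<in> ball 0 \<epsilon> \<Longrightarrow>
      (\<lambda>t. pds cs' Vr (u + t *\<^sub>R axis g 1)) differentiable (at 0)"
    using Ck unfolding Ck_on_def by blast
  have pk: "pd k Vr = pds [k] Vr" by simp
  have each: "pds cs (\<lambda>x. ASFb mu Y x b $ k) 0
      = prod_list (map (\<lambda>c. b $ c) cs) * pds (map good cs @ [k]) Vr 0" for b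
  proof -
    have "pds cs (\<lambda>x. ASFb mu Y x b $ k) 0
      = prod_list (map (\<lambda>c. b $ c) cs) * pds (map good cs) (pd k Vr) (idx good b 0)"
    proof (rule chain[where n=M])
      show "open (ball (0::real^'k) \<epsilon>)" by simp
      show "\<forall>x. idx good b x \<in> ball 0 \<epsilon> \<longrightarrow> ASFb mu Y x b $ k = pd k Vr (idx good b x)"
        unfolding Vr_def
      proof (intro allI impI env[OF A2 ep fin])
        show "\<forall>u\<in>ball 0 \<epsilon>. (\<lambda>t. real_of_ereal (Vfun B D mu (u + t *\<^sub>R axis k 1))) differentiable at 0"
          using difV[of "[]"] by (simp add: Vr_def)
      qed
      show "\<forall>cs' g u. length cs' < M \<longrightarrow> u \<in> ball 0 \<epsilon> \<longrightarrow>
          (\<lambda>t. pds cs' (pd k Vr) (u + t *\<^sub>R axis g 1)) differentiable at 0"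
        using difV by (simp add: pk pds_append[symmetric] del: pds.simps)
      show "length cs \<le> M" using len by simp
      show "idx good b 0 \<in> ball 0 \<epsilon>" using ep by (simp add: idx_zero)
    qed
    then show ?thesis by (simp add: idx_zero pk pds_append del: pds.simps)
  qed
  show ?thesis unfolding i each Vr_def[symmetric] by (rule integral_mult_left_zero)
qed

theorem propositionB1:
  fixes good :: "'c::finite \<Rightarrow> 'k::finite"
    and M :: nat
    and B1 :: "(real^'k) set" and D1 :: "real^'k \<Rightarrow> 'e1 \<Rightarrow> ereal"
    and mu1 :: "'e1 measure" and nu1 :: "(real^'c) measure"
    and Y1 :: "real^'c \<Rightarrow> real^'c \<Rightarrow> 'e1 \<Rightarrow> real^'k"
    and B2 :: "(real^'k) set" and D2 :: "real^'k \<Rightarrow> 'e2 \<Rightarrow> ereal"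
    and mu2 :: "'e2 measure" and nu2 :: "(real^'c) measure"
    and Y2 :: "real^'c \<Rightarrow> real^'c \<Rightarrow> 'e2 \<Rightarrow> real^'k"
    and cs :: "'c list"
  assumes M_pos: "M \<ge> 1"
    and model1: "rc_model good B1 D1 mu1 Y1"
    and A1_1: "assm1 nu1 mu1 Y1" and A2_1: "assm2 good B1 D1 mu1 Y1"
    and A5_1: "assm5 M B1 D1 mu1 nu1 Y1"
    and model2: "rc_model good B2 D2 mu2 Y2"
    and A1_2: "assm1 nu2 mu2 Y2" and A2_2: "assm2 good B2 D2 mu2 Y2"
    and A5_2: "assm5 M B2 D2 mu2 nu2 Y2"
    and same_ASF: "\<exists>H. open H \<and> 0 \<in> H \<and>
        (\<forall>x\<in>H. (\<forall>c. 0 \<le> x $ c) \<longrightarrow> ASF nu1 mu1 Y1 x = ASF nu2 mu2 Y2 x)"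
    and same_V: "\<exists>\<epsilon>>0. \<exists>a::real. \<forall>u\<in>ball 0 \<epsilon>.
        Vfun B1 D1 mu1 u = Vfun B2 D2 mu2 u + ereal a"
    and len: "length cs = M"
  shows "integral\<^sup>L nu1 (\<lambda>b. prod_list (map (\<lambda>c. b $ c) cs))
       = integral\<^sup>L nu2 (\<lambda>b. prod_list (map (\<lambda>c. b $ c) cs))"
proof -
  obtain k :: 'k where True by simp
  define \<gamma> where "\<gamma> = map good cs @ [k]"
  define V1 where "V1 = (\<lambda>u. real_of_ereal (Vfun B1 D1 mu1 u))"
  define V2 where "V2 = (\<lambda>u. real_of_ereal (Vfun B2 D2 mu2 u))"
  have lg: "length \<gamma> = Suc M" using len by (simp add: \<gamma>_def)
  have f1: "pds cs (\<lambda>x. ASF nu1 mu1 Y1 x $ k) 0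
     = integral\<^sup>L nu1 (\<lambda>b. prod_list (map (\<lambda>c. b $ c) cs)) * pds \<gamma> V1 0"
    unfolding \<gamma>_def V1_def by (rule moment_formula[OF A2_1 A5_1 len])
  have f2: "pds cs (\<lambda>x. ASF nu2 mu2 Y2 x $ k) 0
     = integral\<^sup>L nu2 (\<lambda>b. prod_list (map (\<lambda>c. b $ c) cs)) * pds \<gamma> V2 0"
    unfolding \<gamma>_def V2_def by (rule moment_formula[OF A2_2 A5_2 len])
  have nz: "pds \<gamma> V1 0 \<noteq> 0" using A5_1 lg unfolding assm5_def V1_def by blast
  from A5_2 obtain \<epsilon>2 where ep2: "\<epsilon>2 > 0" and fin2: "\<forall>u\<in>ball 0 \<epsilon>2. \<bar>Vfun B2 D2 mu2 u\<bar> \<noteq> \<infinity>"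
    unfolding assm5_def by blast
  from same_V obtain \<epsilon> a where ep: "\<epsilon> > 0"
    and eqV: "\<forall>u\<in>ball 0 \<epsilon>. Vfun B1 D1 mu1 u = Vfun B2 D2 mu2 u + ereal a" by blast
  have "\<forall>\<^sub>F u in nhds 0. u \<in> ball (0::real^'k) (min \<epsilon> \<epsilon>2)"
    by (rule eventually_nhds_in_open) (use ep ep2 in auto)
  then have "\<forall>\<^sub>F u in nhds 0. V1 u = V2 u + a"
  proof (rule eventually_mono)
    fix u :: "real^'k" assume u: "u \<in> ball 0 (min \<epsilon> \<epsilon>2)"
    then have "\<bar>Vfun B2 D2 mu2 u\<bar> \<noteq> \<infinity>" using bspec[OF fin2, of u] by simp
    then obtain r where r: "Vfun B2 D2 mu2 u = ereal r" by (cases "Vfun B2 D2 mu2 u") auto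
    have "Vfun B1 D1 mu1 u = Vfun B2 D2 mu2 u + ereal a" using bspec[OF eqV, of u] u by simp
    then show "V1 u = V2 u + a" by (simp add: V1_def V2_def r)
  qed
  then have "pds \<gamma> V1 0 = pds \<gamma> (\<lambda>u. V2 u + a) 0" by (rule pds_local)
  also have "\<dots> = pds \<gamma> V2 0" by (simp add: pds_add_const \<gamma>_def)
  finally have CC: "pds \<gamma> V1 0 = pds \<gamma> V2 0" .
  obtain H where H: "open H" "0 \<in> H"
      "\<forall>x\<in>H. (\<forall>c. 0 \<le> x $ c) \<longrightarrow> ASF nu1 mu1 Y1 x = ASF nu2 mu2 Y2 x"
    using same_ASF by blast
  have "pds cs (\<lambda>x. ASF nu1 mu1 Y1 x $ k) 0 = pds cs (\<lambda>x. ASF nu2 mu2 Y2 x $ k) 0"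
  proof (rule pds_orth[OF H(1,2)])
    show "\<forall>c. 0 \<le> (0::real^'c) $ c" by simp
    show "\<forall>z\<in>H. (\<forall>c. 0 \<le> z $ c) \<longrightarrow> ASF nu1 mu1 Y1 z $ k = ASF nu2 mu2 Y2 z $ k"
      using H(3) by simp
    show "pds_exist cs (\<lambda>x. ASF nu1 mu1 Y1 x $ k) 0" using A5_1 len unfolding assm5_def by blast
    show "pds_exist cs (\<lambda>x. ASF nu2 mu2 Y2 x $ k) 0" using A5_2 len unfolding assm5_def by blast
  qed
  then have "integral\<^sup>L nu1 (\<lambda>b. prod_list (map (\<lambda>c. b $ c) cs)) * pds \<gamma> V1 0
      = integral\<^sup>L nu2 (\<lambda>b. prod_list (map (\<lambda>c. b $ c) cs)) * pds \<gamma> V1 0"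
    using f1 f2 CC by simp
  then show ?thesis using nz by simp
qed

end
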